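(* Let $\{\Phi_n\}$ be an irreducible Markov chain on a finite set $\mathsf X$ with transition matrix $P$ and unique invariant probability $\pi$, let $G\colon\mathsf X\to\mathbb{R}^m$, $\xi_n=G(\Phi_n)$, and let $f\colon\mathbb{R}^d\times\mathbb{R}^m\to\mathbb{R}^d$ satisfy: there is $L_f$ with $\|f(\theta',\xi)-f(\theta,\xi)\|+\|f(\theta,\xi')-f(\theta,\xi)\|\le L_f[\|\theta'-\theta\|+\|\xi'-\xi\|]$. Let $\bar f(\theta)=\sum_{z}f(\theta,G(z))\pi(z)$ and let $\hat f(\theta,\cdot)$ be the solution of Poisson's equation $\sum_{z'}P(z,z')\hat f(\theta,z')=\hat f(\theta,z)-[f(\theta,G(z))-\bar f(\theta)]$ normalized by $\sum_z\hat f(\theta,z)\pi(z)=0$. For $\alpha>0$ consider $\theta_{n+1}=\theta_n+\alpha f(\theta_n,\xi_{n+1})$, so that $\Psi_n=(\theta_n,\Phi_n)$ is a Markov chain on $\mathbb{R}^d\times\mathsf X$. Assume $\sup_n\mathsf E[\|\theta_n\|^2]<\infty$ for at least one initial condition, and let $\varpi$ be an invariant probability measure for $\Psi$ under which $\int\|\theta\|\,\varpi(d\theta,dz)<\infty$. Then, for the stationary chain with $\Psi_0\sim\varpi$, for every $n\ge0$, $$\mathsf E[\bar f(\theta_n)]=\alpha\,\mathsf E[\Upsilon_n],\qquad \Upsilon_n:=-\frac1\alpha\big[\hat f(\theta_{n+1},\Phi_{n+2})-\hat f(\theta_n,\Phi_{n+2})\big],$$ and both sides are independent of $n$. *)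

theory Defs
  imports "HOL-Probability.Probability"
begin

definition stochastic_matrix :: "('x::finite \<Rightarrow> 'x \<Rightarrow> real) \<Rightarrow> bool" where
  "stochastic_matrix P \<longleftrightarrow> (\<forall>z z'. 0 \<le> P z z') \<and> (\<forall>z. (\<Sum>z'\<in>UNIV. P z z') = 1)"

fun mat_pow :: "('x::finite \<Rightarrow> 'x \<Rightarrow> real) \<Rightarrow> nat \<Rightarrow> 'x \<Rightarrow> 'x \<Rightarrow> real" where
  "mat_pow P 0 = (\<lambda>z z'. if z = z' then 1 else 0)"
| "mat_pow P (Suc n) = (\<lambda>z z'. \<Sum>y\<in>UNIV. mat_pow P n z y * P y z')"

definition irreducible_matrix :: "('x::finite \<Rightarrow> 'x \<Rightarrow> real) \<Rightarrow> bool" where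
  "irreducible_matrix P \<longleftrightarrow> (\<forall>z z'. \<exists>n. mat_pow P n z z' > 0)"

definition invariant_prob :: "('x::finite \<Rightarrow> 'x \<Rightarrow> real) \<Rightarrow> ('x \<Rightarrow> real) \<Rightarrow> bool" where
  "invariant_prob P \<pi> \<longleftrightarrow> (\<forall>z. 0 \<le> \<pi> z) \<and> (\<Sum>z\<in>UNIV. \<pi> z) = 1
     \<and> (\<forall>z'. (\<Sum>z\<in>UNIV. \<pi> z * P z z') = \<pi> z')"

definition trans_pmf :: "('x::finite \<Rightarrow> 'x \<Rightarrow> real) \<Rightarrow> 'x \<Rightarrow> 'x pmf" where
  "trans_pmf P z = embed_pmf (P z)"

definition state_space :: "('d::euclidean_space \<times> 'x) measure" where
  "state_space = borel \<Otimes>\<^sub>M count_space UNIV"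

definition sa_kernel ::
  "('x::finite \<Rightarrow> 'x \<Rightarrow> real) \<Rightarrow> ('x \<Rightarrow> 'm) \<Rightarrow> ('d::euclidean_space \<Rightarrow> 'm \<Rightarrow> 'd) \<Rightarrow> real
     \<Rightarrow> 'd \<times> 'x \<Rightarrow> ('d \<times> 'x) measure" where
  "sa_kernel P G f \<alpha> \<psi> =
     distr (measure_pmf (trans_pmf P (snd \<psi>))) state_space
       (\<lambda>z'. (fst \<psi> + \<alpha> *\<^sub>R f (fst \<psi>) (G z'), z'))"

fun chain_law :: "('s \<Rightarrow> 's measure) \<Rightarrow> 's measure \<Rightarrow> nat \<Rightarrow> 's measure" where
  "chain_law K \<mu> 0 = \<mu>"
| "chain_law K \<mu> (Suc n) = bind (chain_law K \<mu> n) K"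

text \<open>Joint law of (\<Psi>_n, \<Psi>_{n+1}, \<Psi>_{n+2}) when \<Psi>_0 has law \<mu>.\<close>
definition chain_law3 :: "('s \<Rightarrow> 's measure) \<Rightarrow> 's measure \<Rightarrow> 's measure \<Rightarrow> nat \<Rightarrow> ('s \<times> 's \<times> 's) measure" where
  "chain_law3 K S \<mu> n =
     bind (chain_law K \<mu> n) (\<lambda>\<psi>. bind (K \<psi>) (\<lambda>\<psi>1.
        distr (K \<psi>1) (S \<Otimes>\<^sub>M S \<Otimes>\<^sub>M S) (\<lambda>\<psi>2. (\<psi>, \<psi>1, \<psi>2))))"

end

theory Submission
  imports Defs
begin



lemma mat_pow_nonneg:
  assumes "stochastic_matrix P"
  shows "mat_pow P n z z' \<ge> 0"
  using assms
  by (induction n arbitrary: z') (auto simp: stochastic_matrix_def intro!: sum_nonneg)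

lemma harmonic_closed:
  fixes h :: "'x::finite \<Rightarrow> real"
  assumes S: "stochastic_matrix P"
    and harm: "\<And>z. (\<Sum>z'\<in>UNIV. P z z' * h z') = h z"
    and max: "\<And>y. h y \<le> h z"
    and pos: "P z z' > 0"
  shows "h z' = h z"
proof -
  have "(\<Sum>y\<in>UNIV. P z y * (h z - h y)) = h z * (\<Sum>y\<in>UNIV. P z y) - (\<Sum>y\<in>UNIV. P z y * h y)"
    by (simp add: algebra_simps sum_subtractf sum_distrib_left)
  also have "\<dots> = 0" using S harm[of z] by (simp add: stochastic_matrix_def)
  finally have "(\<Sum>y\<in>UNIV. P z y * (h z - h y)) = 0" .
  moreover have "\<forall>y\<in>UNIV. 0 \<le> P z y * (h z - h y)"
    using S max by (auto simp: stochastic_matrix_def)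
  ultimately have "\<forall>y\<in>UNIV. P z y * (h z - h y) = 0"
    using sum_nonneg_eq_0_iff[of UNIV "\<lambda>y. P z y * (h z - h y)"] by simp
  then have "P z z' * (h z - h z') = 0" by blast
  with pos show ?thesis by simp
qed

lemma harmonic_const:
  fixes h :: "'x::finite \<Rightarrow> real"
  assumes S: "stochastic_matrix P" and Irr: "irreducible_matrix P"
    and harm: "\<And>z. (\<Sum>z'\<in>UNIV. P z z' * h z') = h z"
  shows "h y = h x"
proof -
  obtain z0 where z0: "\<And>y. h y \<le> h z0"
  proof -
    have "Max (range h) \<in> range h" by (rule Max_in) auto
    then obtain z0 where "h z0 = Max (range h)" by (metis rangeE)
    moreover have "h y \<le> Max (range h)" for y by (rule Max_ge) auto
    ultimately show ?thesis using that by metis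
  qed
  have key: "mat_pow P n z0 w > 0 \<Longrightarrow> h w = h z0" for n w
  proof (induction n arbitrary: w)
    case 0 then show ?case by (auto split: if_splits)
  next
    case (Suc n)
    then have "(\<Sum>y\<in>UNIV. mat_pow P n z0 y * P y w) > 0" by simp
    then obtain y where "mat_pow P n z0 y * P y w \<noteq> 0"
      by (metis (no_types, lifting) less_irrefl sum.neutral)
    moreover have "mat_pow P n z0 y \<ge> 0" "P y w \<ge> 0"
      using mat_pow_nonneg[OF S] S by (auto simp: stochastic_matrix_def)
    ultimately have "mat_pow P n z0 y > 0" "P y w > 0"
      by (auto simp: less_le)
    then have "h y = h z0" using Suc.IH by blast
    then show ?case using harmonic_closed[OF S harm, of y w] z0 \<open>P y w > 0\<close> by simp
  qed
  have "h w = h z0" for w using Irr key unfolding irreducible_matrix_def by blast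
  then show ?thesis by metis
qed

lemma poisson_bound:
  fixes P :: "'x::finite \<Rightarrow> 'x \<Rightarrow> real"
  assumes S: "stochastic_matrix P" and Irr: "irreducible_matrix P"
    and pi1: "(\<Sum>z\<in>UNIV. \<pi> z) = 1"
  obtains C where "C \<ge> 0" "\<And>(D :: 'x \<Rightarrow> 'd::euclidean_space) E z.
      (\<And>z. D z - (\<Sum>z'\<in>UNIV. P z z' *\<^sub>R D z') = E z) \<Longrightarrow> (\<Sum>z\<in>UNIV. \<pi> z *\<^sub>R D z) = 0
      \<Longrightarrow> norm (D z) \<le> C * (\<Sum>z\<in>UNIV. norm (E z))"
proof -
  define T :: "real^'x \<Rightarrow> (real^'x) \<times> real" where
    "T v = (\<chi> z. v$z - (\<Sum>z'\<in>UNIV. P z z' * v$z'), \<Sum>z\<in>UNIV. \<pi> z * v$z)" for v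
  have lin: "linear T"
    unfolding T_def by (intro linearI) (simp_all add: vec_eq_iff algebra_simps sum.distrib sum_distrib_left)
  have inj: "inj T"
    unfolding linear_injective_0[OF lin]
  proof (intro allI impI)
    fix v assume "T v = 0"
    then have "fst (T v) $ z = 0" "snd (T v) = 0" for z by simp_all
    then have h1: "\<And>z. v$z - (\<Sum>z'\<in>UNIV. P z z' * v$z') = 0"
      and h2: "(\<Sum>z\<in>UNIV. \<pi> z * v$z) = 0"
      unfolding T_def fst_conv snd_conv vec_lambda_beta by blast+
    obtain x0 :: 'x where True by blast
    have c: "v$y = v$x0" for y
    proof (rule harmonic_const[OF S Irr, of "\<lambda>z. v$z"])
      show "(\<Sum>z'\<in>UNIV. P z z' * v$z') = v$z" for z using h1[of z] by linarith
    qed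
    have "(\<Sum>z\<in>UNIV. \<pi> z * v$z) = (\<Sum>z\<in>UNIV. \<pi> z) * v$x0"
      by (subst c) (simp add: sum_distrib_right)
    then have "v$x0 = 0" using pi1 h2 by simp
    then show "v = 0" using c by (metis vec_eq_iff zero_index)
  qed
  obtain B where B: "B > 0" "\<And>v. B * norm v \<le> norm (T v)"
    using linear_inj_bounded_below_pos[OF lin inj] by blast
  show ?thesis
  proof (rule that[of "real DIM('d) / B"])
    show "0 \<le> real DIM('d) / B" using B by simp
    fix D :: "'x \<Rightarrow> 'd" and E z
    assume DE: "\<And>z. D z - (\<Sum>z'\<in>UNIV. P z z' *\<^sub>R D z') = E z"
      and Dn: "(\<Sum>z\<in>UNIV. \<pi> z *\<^sub>R D z) = 0"
    have comp: "\<bar>D z \<bullet> b\<bar> \<le> (\<Sum>z\<in>UNIV. norm (E z)) / B" if b: "b \<in> Basis" for b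
    proof -
      define v :: "real^'x" where "v = (\<chi> z. D z \<bullet> b)"
      have "T v = (\<chi> z. E z \<bullet> b, 0)"
      proof -
        have 1: "D z \<bullet> b - (\<Sum>z'\<in>UNIV. P z z' * (D z' \<bullet> b)) = E z \<bullet> b" for z
          using arg_cong[OF DE[of z], of "\<lambda>x. x \<bullet> b"] by (simp add: inner_diff_left inner_sum_left)
        have 2: "(\<Sum>z\<in>UNIV. \<pi> z * (D z \<bullet> b)) = 0"
          using arg_cong[OF Dn, of "\<lambda>x. x \<bullet> b"] by (simp add: inner_sum_left)
        show ?thesis by (simp add: T_def v_def vec_eq_iff 1 2)
      qed
      then have "norm (T v) = norm (\<chi> z. E z \<bullet> b)" by (simp add: norm_Pair)
      also have "\<dots> \<le> (\<Sum>z\<in>UNIV. \<bar>E z \<bullet> b\<bar>)" using norm_le_l1_cart[of "\<chi> z. E z \<bullet> b"] by simp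
      also have "\<dots> \<le> (\<Sum>z\<in>UNIV. norm (E z))" by (intro sum_mono Basis_le_norm b)
      finally have "B * norm v \<le> (\<Sum>z\<in>UNIV. norm (E z))" using B(2)[of v] by linarith
      moreover have "\<bar>D z \<bullet> b\<bar> \<le> norm v" using component_le_norm_cart[of v z] by (simp add: v_def)
      ultimately have "B * \<bar>D z \<bullet> b\<bar> \<le> (\<Sum>z\<in>UNIV. norm (E z))"
        using B(1) by (meson less_imp_le mult_left_mono order_trans)
      then show ?thesis by (simp add: pos_le_divide_eq[OF B(1)] mult.commute)
    qed
    have "norm (D z) \<le> (\<Sum>b\<in>Basis. \<bar>D z \<bullet> b\<bar>)" by (rule norm_le_l1)
    also have "\<dots> \<le> (\<Sum>b\<in>(Basis::'d set). (\<Sum>z\<in>UNIV. norm (E z)) / B)" by (intro sum_mono comp)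
    also have "\<dots> = real DIM('d) / B * (\<Sum>z\<in>UNIV. norm (E z))" by simp
    finally show "norm (D z) \<le> real DIM('d) / B * (\<Sum>z\<in>UNIV. norm (E z))" .
  qed
qed



lemma transfer_real_nonneg:
  fixes h :: "'a \<Rightarrow> real" and T :: "'i \<Rightarrow> 'c \<Rightarrow> 'a" and c :: "'i \<Rightarrow> 'c \<Rightarrow> real"
  assumes I: "finite I"
    and T: "\<And>i. i \<in> I \<Longrightarrow> T i \<in> N \<rightarrow>\<^sub>M M"
    and cm: "\<And>i. i \<in> I \<Longrightarrow> c i \<in> borel_measurable N"
    and cp: "\<And>i y. i \<in> I \<Longrightarrow> 0 \<le> c i y"
    and nn: "\<And>g. g \<in> borel_measurable M \<Longrightarrow>
        (\<integral>\<^sup>+x. g x \<partial>M) = (\<integral>\<^sup>+y. (\<Sum>i\<in>I. ennreal (c i y) * g (T i y)) \<partial>N)"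
    and h: "integrable M h" and hp: "\<And>x. 0 \<le> h x"
  shows "integrable N (\<lambda>y. \<Sum>i\<in>I. c i y * h (T i y))"
    and "(\<integral>y. (\<Sum>i\<in>I. c i y * h (T i y)) \<partial>N) = integral\<^sup>L M h"
proof -
  have hm: "h \<in> borel_measurable M" using h by auto
  have m: "(\<lambda>y. \<Sum>i\<in>I. c i y * h (T i y)) \<in> borel_measurable N"
    using I T cm hm by (intro borel_measurable_sum borel_measurable_times) (auto intro: measurable_compose)
  have eq: "(\<integral>\<^sup>+y. ennreal (\<Sum>i\<in>I. c i y * h (T i y)) \<partial>N) = (\<integral>\<^sup>+x. ennreal (h x) \<partial>M)"
  proof -
    have "(\<integral>\<^sup>+x. ennreal (h x) \<partial>M) = (\<integral>\<^sup>+y. (\<Sum>i\<in>I. ennreal (c i y) * ennreal (h (T i y))) \<partial>N)"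
      using hm by (intro nn) auto
    also have "\<dots> = (\<integral>\<^sup>+y. ennreal (\<Sum>i\<in>I. c i y * h (T i y)) \<partial>N)"
      using cp hp by (intro nn_integral_cong) (simp add: ennreal_mult sum_ennreal[symmetric])
    finally show ?thesis by simp
  qed
  have fin: "(\<integral>\<^sup>+x. ennreal (h x) \<partial>M) < \<infinity>"
    using h hp by (simp add: integrable_iff_bounded)
  show int: "integrable N (\<lambda>y. \<Sum>i\<in>I. c i y * h (T i y))"
    using m eq fin cp hp by (intro integrableI_nonneg) (auto intro!: sum_nonneg)
  have "(\<integral>y. (\<Sum>i\<in>I. c i y * h (T i y)) \<partial>N) = enn2real (\<integral>\<^sup>+y. ennreal (\<Sum>i\<in>I. c i y * h (T i y)) \<partial>N)"
    using m cp hp by (intro integral_eq_nn_integral) (auto intro!: sum_nonneg)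
  also have "\<dots> = enn2real (\<integral>\<^sup>+x. ennreal (h x) \<partial>M)" using eq by simp
  also have "\<dots> = integral\<^sup>L M h" using hm hp by (intro integral_eq_nn_integral[symmetric]) auto
  finally show "(\<integral>y. (\<Sum>i\<in>I. c i y * h (T i y)) \<partial>N) = integral\<^sup>L M h" .
qed

lemma transfer_integrable:
  fixes h :: "'a \<Rightarrow> 'b::euclidean_space" and T :: "'i \<Rightarrow> 'c \<Rightarrow> 'a" and c :: "'i \<Rightarrow> 'c \<Rightarrow> real"
  assumes I: "finite I"
    and T: "\<And>i. i \<in> I \<Longrightarrow> T i \<in> N \<rightarrow>\<^sub>M M"
    and cm: "\<And>i. i \<in> I \<Longrightarrow> c i \<in> borel_measurable N"
    and cp: "\<And>i y. i \<in> I \<Longrightarrow> 0 \<le> c i y"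
    and nn: "\<And>g. g \<in> borel_measurable M \<Longrightarrow>
        (\<integral>\<^sup>+x. g x \<partial>M) = (\<integral>\<^sup>+y. (\<Sum>i\<in>I. ennreal (c i y) * g (T i y)) \<partial>N)"
    and h: "integrable M h"
  shows "integrable N (\<lambda>y. \<Sum>i\<in>I. c i y *\<^sub>R h (T i y))"
proof -
  have hm: "h \<in> borel_measurable M" using h by auto
  have "integrable N (\<lambda>y. \<Sum>i\<in>I. c i y * norm (h (T i y)))"
    by (rule transfer_real_nonneg(1)[OF I T cm cp nn]) (use h in auto)
  then show ?thesis
  proof (rule Bochner_Integration.integrable_bound)
    show "(\<lambda>y. \<Sum>i\<in>I. c i y *\<^sub>R h (T i y)) \<in> borel_measurable N"
      using I T cm hm by (intro borel_measurable_sum borel_measurable_scaleR) (auto intro: measurable_compose)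
    show "AE y in N. norm (\<Sum>i\<in>I. c i y *\<^sub>R h (T i y)) \<le> norm (\<Sum>i\<in>I. c i y * norm (h (T i y)))"
    proof (intro AE_I2)
      fix y
      have "norm (\<Sum>i\<in>I. c i y *\<^sub>R h (T i y)) \<le> (\<Sum>i\<in>I. norm (c i y *\<^sub>R h (T i y)))"
        by (rule norm_sum)
      also have "\<dots> = (\<Sum>i\<in>I. c i y * norm (h (T i y)))"
        using cp by (intro sum.cong) auto
      also have "\<dots> \<le> norm (\<Sum>i\<in>I. c i y * norm (h (T i y)))" by simp
      finally show "norm (\<Sum>i\<in>I. c i y *\<^sub>R h (T i y)) \<le> norm (\<Sum>i\<in>I. c i y * norm (h (T i y)))" .
    qed
  qed
qed

lemma transfer_real:
  fixes h :: "'a \<Rightarrow> real" and T :: "'i \<Rightarrow> 'c \<Rightarrow> 'a" and c :: "'i \<Rightarrow> 'c \<Rightarrow> real"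
  assumes I: "finite I"
    and T: "\<And>i. i \<in> I \<Longrightarrow> T i \<in> N \<rightarrow>\<^sub>M M"
    and cm: "\<And>i. i \<in> I \<Longrightarrow> c i \<in> borel_measurable N"
    and cp: "\<And>i y. i \<in> I \<Longrightarrow> 0 \<le> c i y"
    and nn: "\<And>g. g \<in> borel_measurable M \<Longrightarrow>
        (\<integral>\<^sup>+x. g x \<partial>M) = (\<integral>\<^sup>+y. (\<Sum>i\<in>I. ennreal (c i y) * g (T i y)) \<partial>N)"
    and h: "integrable M h"
  shows "(\<integral>y. (\<Sum>i\<in>I. c i y * h (T i y)) \<partial>N) = integral\<^sup>L M h"
proof -
  define hp where "hp x = (\<bar>h x\<bar> + h x) / 2" for x
  define hn where "hn x = (\<bar>h x\<bar> - h x) / 2" for x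
  have ip: "integrable M hp" and ineg: "integrable M hn" using h unfolding hp_def hn_def by auto
  have pp: "0 \<le> hp x" "0 \<le> hn x" for x unfolding hp_def hn_def by auto
  have hsplit: "h x = hp x - hn x" for x unfolding hp_def hn_def by (simp add: field_simps)
  note P = transfer_real_nonneg[OF I T cm cp nn ip pp(1)]
  note Q = transfer_real_nonneg[OF I T cm cp nn ineg pp(2)]
  have "(\<integral>y. (\<Sum>i\<in>I. c i y * h (T i y)) \<partial>N)
      = (\<integral>y. (\<Sum>i\<in>I. c i y * hp (T i y)) - (\<Sum>i\<in>I. c i y * hn (T i y)) \<partial>N)"
    by (intro Bochner_Integration.integral_cong refl) (simp add: hsplit right_diff_distrib sum_subtractf)
  also have "\<dots> = integral\<^sup>L M hp - integral\<^sup>L M hn"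
    using P Q by (simp add: Bochner_Integration.integral_diff)
  also have "\<dots> = integral\<^sup>L M (\<lambda>x. hp x - hn x)"
    using ip ineg by (simp add: Bochner_Integration.integral_diff)
  also have "\<dots> = integral\<^sup>L M h" by (simp add: hsplit[symmetric])
  finally show ?thesis .
qed

lemma transfer_vec:
  fixes h :: "'a \<Rightarrow> 'b::euclidean_space" and T :: "'i \<Rightarrow> 'c \<Rightarrow> 'a" and c :: "'i \<Rightarrow> 'c \<Rightarrow> real"
  assumes I: "finite I"
    and T: "\<And>i. i \<in> I \<Longrightarrow> T i \<in> N \<rightarrow>\<^sub>M M"
    and cm: "\<And>i. i \<in> I \<Longrightarrow> c i \<in> borel_measurable N"
    and cp: "\<And>i y. i \<in> I \<Longrightarrow> 0 \<le> c i y"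
    and nn: "\<And>g. g \<in> borel_measurable M \<Longrightarrow>
        (\<integral>\<^sup>+x. g x \<partial>M) = (\<integral>\<^sup>+y. (\<Sum>i\<in>I. ennreal (c i y) * g (T i y)) \<partial>N)"
    and h: "integrable M h"
  shows "integrable N (\<lambda>y. \<Sum>i\<in>I. c i y *\<^sub>R h (T i y))"
    and "(\<integral>y. (\<Sum>i\<in>I. c i y *\<^sub>R h (T i y)) \<partial>N) = integral\<^sup>L M h"
proof -
  note int = transfer_integrable[OF I T cm cp nn h]
  show "integrable N (\<lambda>y. \<Sum>i\<in>I. c i y *\<^sub>R h (T i y))" by (rule int)
  show "(\<integral>y. (\<Sum>i\<in>I. c i y *\<^sub>R h (T i y)) \<partial>N) = integral\<^sup>L M h"
  proof (rule euclidean_eqI)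
    fix b :: 'b assume b: "b \<in> Basis"
    have hb: "integrable M (\<lambda>x. h x \<bullet> b)" by (rule integrable_inner_left) (rule h)
    have "(\<integral>y. (\<Sum>i\<in>I. c i y *\<^sub>R h (T i y)) \<partial>N) \<bullet> b = (\<integral>y. (\<Sum>i\<in>I. c i y *\<^sub>R h (T i y)) \<bullet> b \<partial>N)"
      using int by simp
    also have "\<dots> = (\<integral>y. (\<Sum>i\<in>I. c i y * (h (T i y) \<bullet> b)) \<partial>N)"
      by (simp add: inner_sum_left)
    also have "\<dots> = (\<integral>x. h x \<bullet> b \<partial>M)"
      using transfer_real[OF I T cm cp nn hb] .
    also have "\<dots> = integral\<^sup>L M h \<bullet> b" using h by simp
    finally show "(\<integral>y. (\<Sum>i\<in>I. c i y *\<^sub>R h (T i y)) \<partial>N) \<bullet> b = integral\<^sup>L M h \<bullet> b" .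
  qed
qed

lemma transfer_back:
  fixes h :: "'a \<Rightarrow> 'b::euclidean_space" and T :: "'i \<Rightarrow> 'c \<Rightarrow> 'a" and c :: "'i \<Rightarrow> 'c \<Rightarrow> real"
  assumes I: "finite I"
    and cp: "\<And>i y. i \<in> I \<Longrightarrow> 0 \<le> c i y"
    and nn: "\<And>g. g \<in> borel_measurable M \<Longrightarrow>
        (\<integral>\<^sup>+x. g x \<partial>M) = (\<integral>\<^sup>+y. (\<Sum>i\<in>I. ennreal (c i y) * g (T i y)) \<partial>N)"
    and hm: "h \<in> borel_measurable M"
    and int: "integrable N (\<lambda>y. \<Sum>i\<in>I. c i y * norm (h (T i y)))"
  shows "integrable M h"
proof -
  have "(\<integral>\<^sup>+x. ennreal (norm (h x)) \<partial>M) = (\<integral>\<^sup>+y. (\<Sum>i\<in>I. ennreal (c i y) * ennreal (norm (h (T i y)))) \<partial>N)"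
    using hm by (intro nn) auto
  also have "\<dots> = (\<integral>\<^sup>+y. ennreal (norm (\<Sum>i\<in>I. c i y * norm (h (T i y)))) \<partial>N)"
  proof (intro nn_integral_cong)
    fix y
    have "(\<Sum>i\<in>I. ennreal (c i y) * ennreal (norm (h (T i y)))) = ennreal (\<Sum>i\<in>I. c i y * norm (h (T i y)))"
      using cp by (simp add: ennreal_mult sum_ennreal[symmetric])
    also have "\<dots> = ennreal (norm (\<Sum>i\<in>I. c i y * norm (h (T i y))))"
      using cp by (subst real_norm_def, subst abs_of_nonneg) (auto intro!: sum_nonneg)
    finally show "(\<Sum>i\<in>I. ennreal (c i y) * ennreal (norm (h (T i y)))) = ennreal (norm (\<Sum>i\<in>I. c i y * norm (h (T i y))))" .
  qed
  also have "\<dots> < \<infinity>" using int by (simp add: integrable_iff_bounded)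
  finally show ?thesis using hm by (simp add: integrable_iff_bounded)
qed



definition nxt :: "('d::euclidean_space \<Rightarrow> 'm \<Rightarrow> 'd) \<Rightarrow> ('x \<Rightarrow> 'm) \<Rightarrow> real \<Rightarrow> 'd \<times> 'x \<Rightarrow> 'x \<Rightarrow> 'd \<times> 'x" where
  "nxt f G \<alpha> \<psi> z' = (fst \<psi> + \<alpha> *\<^sub>R f (fst \<psi>) (G z'), z')"

lemma pmf_trans:
  assumes "stochastic_matrix P"
  shows "pmf (trans_pmf P z) z' = P z z'"
  unfolding trans_pmf_def
  by (rule pmf_embed_pmf) (use assms in \<open>auto simp: stochastic_matrix_def nn_integral_count_space_finite sum_ennreal\<close>)

lemma space_state_space[simp]: "space state_space = UNIV"
  by (simp add: state_space_def space_pair_measure)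

lemma nxt_meas:
  fixes f :: "'d::euclidean_space \<Rightarrow> 'm \<Rightarrow> 'd" and G :: "'x::finite \<Rightarrow> 'm"
  assumes fm: "\<And>\<xi>. (\<lambda>\<theta>. f \<theta> \<xi>) \<in> borel_measurable borel"
  shows "(\<lambda>\<psi>. nxt f G \<alpha> \<psi> z') \<in> state_space \<rightarrow>\<^sub>M state_space"
proof -
  have "(\<lambda>\<psi>::'d\<times>'x. fst \<psi> + \<alpha> *\<^sub>R f (fst \<psi>) (G z')) \<in> state_space \<rightarrow>\<^sub>M borel"
    unfolding state_space_def
    by (intro borel_measurable_add borel_measurable_scaleR measurable_const measurable_fst''
        measurable_compose[OF measurable_fst fm]) (simp_all add: fm)
  then show ?thesis
    unfolding nxt_def by (subst (2) state_space_def) (intro measurable_Pair; simp)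
qed

lemma nxt_meas2:
  fixes f :: "'d::euclidean_space \<Rightarrow> 'm \<Rightarrow> 'd" and G :: "'x::finite \<Rightarrow> 'm"
  assumes fm: "\<And>\<xi>. (\<lambda>\<theta>. f \<theta> \<xi>) \<in> borel_measurable borel"
  shows "(\<lambda>(\<psi>, z'). nxt f G \<alpha> \<psi> z') \<in> (state_space \<Otimes>\<^sub>M count_space UNIV) \<rightarrow>\<^sub>M state_space"
proof -
  have A: "(\<lambda>x. nxt f G \<alpha> (fst x) i) \<in> (state_space \<Otimes>\<^sub>M count_space UNIV) \<rightarrow>\<^sub>M state_space" for i
    by (rule measurable_compose[OF measurable_fst nxt_meas[OF fm]])
  have B: "snd \<in> (state_space \<Otimes>\<^sub>M count_space UNIV) \<rightarrow>\<^sub>M count_space (UNIV::'x set)" by simp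
  show ?thesis
    using measurable_compose_countable'[where f="\<lambda>i x. nxt f G \<alpha> (fst x) i" and g=snd and I=UNIV, OF A B]
    by (simp add: case_prod_beta')
qed

lemma K_meas:
  fixes f :: "'d::euclidean_space \<Rightarrow> 'm \<Rightarrow> 'd" and G :: "'x::finite \<Rightarrow> 'm"
  assumes fm: "\<And>\<xi>. (\<lambda>\<theta>. f \<theta> \<xi>) \<in> borel_measurable borel"
  shows "sa_kernel P G f \<alpha> \<in> state_space \<rightarrow>\<^sub>M subprob_algebra state_space"
proof -
  have "(\<lambda>\<psi>. distr ((\<lambda>\<psi>. measure_pmf (trans_pmf P (snd \<psi>))) \<psi>) state_space (nxt f G \<alpha> \<psi>))
        \<in> state_space \<rightarrow>\<^sub>M subprob_algebra state_space"
  proof (rule measurable_distr2[where M="count_space UNIV"])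
    show "(\<lambda>(\<psi>, z'). nxt f G \<alpha> \<psi> z') \<in> (state_space \<Otimes>\<^sub>M count_space UNIV) \<rightarrow>\<^sub>M state_space"
      by (rule nxt_meas2[OF fm])
    show "(\<lambda>\<psi>. measure_pmf (trans_pmf P (snd \<psi>))) \<in> state_space \<rightarrow>\<^sub>M subprob_algebra (count_space UNIV)"
      by (rule measurable_compose[OF _ measurable_measure_pmf]) (simp add: state_space_def)
  qed
  moreover have "nxt f G \<alpha> \<psi> = (\<lambda>z'. (fst \<psi> + \<alpha> *\<^sub>R f (fst \<psi>) (G z'), z'))" for \<psi>
    by (simp add: nxt_def fun_eq_iff)
  ultimately show ?thesis unfolding sa_kernel_def[abs_def] by simp
qed

lemma K_nn:
  fixes f :: "'d::euclidean_space \<Rightarrow> 'm \<Rightarrow> 'd" and G :: "'x::finite \<Rightarrow> 'm"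
  assumes S: "stochastic_matrix P"
    and u: "u \<in> borel_measurable state_space"
  shows "(\<integral>\<^sup>+x. u x \<partial>sa_kernel P G f \<alpha> \<psi>) = (\<Sum>z'\<in>UNIV. ennreal (P (snd \<psi>) z') * u (nxt f G \<alpha> \<psi> z'))"
proof -
  have "(\<integral>\<^sup>+x. u x \<partial>sa_kernel P G f \<alpha> \<psi>) = (\<integral>\<^sup>+z'. u (nxt f G \<alpha> \<psi> z') \<partial>measure_pmf (trans_pmf P (snd \<psi>)))"
    unfolding sa_kernel_def nxt_def by (rule nn_integral_distr) (auto simp: u)
  also have "\<dots> = (\<integral>\<^sup>+z'. ennreal (pmf (trans_pmf P (snd \<psi>)) z') * u (nxt f G \<alpha> \<psi> z') \<partial>count_space UNIV)"
    by (rule nn_integral_measure_pmf)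
  also have "\<dots> = (\<Sum>z'\<in>UNIV. ennreal (P (snd \<psi>) z') * u (nxt f G \<alpha> \<psi> z'))"
    by (simp add: nn_integral_count_space_finite pmf_trans[OF S])
  finally show ?thesis .
qed

lemma nn1:
  fixes f :: "'d::euclidean_space \<Rightarrow> 'm \<Rightarrow> 'd" and G :: "'x::finite \<Rightarrow> 'm"
  assumes S: "stochastic_matrix P"
    and fm: "\<And>\<xi>. (\<lambda>\<theta>. f \<theta> \<xi>) \<in> borel_measurable borel"
    and Ws: "sets W = sets state_space"
    and g: "g \<in> borel_measurable state_space"
  shows "(\<integral>\<^sup>+x. g x \<partial>bind W (sa_kernel P G f \<alpha>))
      = (\<integral>\<^sup>+\<psi>. (\<Sum>z'\<in>UNIV. ennreal (P (snd \<psi>) z') * g (nxt f G \<alpha> \<psi> z')) \<partial>W)"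
proof -
  have Km: "sa_kernel P G f \<alpha> \<in> W \<rightarrow>\<^sub>M subprob_algebra state_space"
    using K_meas[OF fm] by (simp add: measurable_cong_sets[OF Ws refl])
  show ?thesis
    by (simp add: nn_integral_bind[OF g Km] K_nn[OF S g])
qed

definition T3 :: "('d::euclidean_space \<Rightarrow> 'm \<Rightarrow> 'd) \<Rightarrow> ('x \<Rightarrow> 'm) \<Rightarrow> real \<Rightarrow> 'x \<times> 'x \<Rightarrow> 'd \<times> 'x
    \<Rightarrow> ('d \<times> 'x) \<times> ('d \<times> 'x) \<times> ('d \<times> 'x)" where
  "T3 f G \<alpha> i \<psi> = (\<psi>, nxt f G \<alpha> \<psi> (fst i), nxt f G \<alpha> (nxt f G \<alpha> \<psi> (fst i)) (snd i))"

lemma nn3: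
  fixes f :: "'d::euclidean_space \<Rightarrow> 'm \<Rightarrow> 'd" and G :: "'x::finite \<Rightarrow> 'm"
  assumes S: "stochastic_matrix P"
    and fm: "\<And>\<xi>. (\<lambda>\<theta>. f \<theta> \<xi>) \<in> borel_measurable borel"
    and Ws: "sets W = sets state_space"
    and g: "g \<in> borel_measurable (state_space \<Otimes>\<^sub>M state_space \<Otimes>\<^sub>M state_space)"
  shows "(\<integral>\<^sup>+x. g x \<partial>bind W (\<lambda>\<psi>. bind (sa_kernel P G f \<alpha> \<psi>) (\<lambda>\<psi>1.
        distr (sa_kernel P G f \<alpha> \<psi>1) (state_space \<Otimes>\<^sub>M state_space \<Otimes>\<^sub>M state_space) (\<lambda>\<psi>2. (\<psi>, \<psi>1, \<psi>2)))))
      = (\<integral>\<^sup>+\<psi>. (\<Sum>i\<in>UNIV. ennreal (P (snd \<psi>) (fst i) * P (fst i) (snd i)) * g (T3 f G \<alpha> i \<psi>)) \<partial>W)"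
proof -
  let ?S = "state_space :: ('d \<times> 'x) measure"
  let ?S3 = "?S \<Otimes>\<^sub>M ?S \<Otimes>\<^sub>M ?S"
  let ?K = "sa_kernel P G f \<alpha>"
  have KS: "?K \<in> ?S \<rightarrow>\<^sub>M subprob_algebra ?S" by (rule K_meas[OF fm])
  have sK: "sets (?K \<psi>) = sets ?S" for \<psi>
    unfolding sa_kernel_def by simp
  have Dm: "(\<lambda>x. distr (?K (snd x)) ?S3 (\<lambda>\<psi>2. (fst x, snd x, \<psi>2))) \<in> (?S \<Otimes>\<^sub>M ?S) \<rightarrow>\<^sub>M subprob_algebra ?S3"
  proof (rule measurable_distr2[where M="?S"])
    show "(\<lambda>x. ?K (snd x)) \<in> (?S \<Otimes>\<^sub>M ?S) \<rightarrow>\<^sub>M subprob_algebra ?S"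
      by (rule measurable_compose[OF measurable_snd KS])
    show "(\<lambda>(x, \<psi>2). (fst x, snd x, \<psi>2)) \<in> ((?S \<Otimes>\<^sub>M ?S) \<Otimes>\<^sub>M ?S) \<rightarrow>\<^sub>M ?S3"
      by measurable
  qed
  have Bm: "(\<lambda>\<psi>. bind (?K \<psi>) (\<lambda>\<psi>1. distr (?K \<psi>1) ?S3 (\<lambda>\<psi>2. (\<psi>, \<psi>1, \<psi>2)))) \<in> ?S \<rightarrow>\<^sub>M subprob_algebra ?S3"
    by (rule measurable_bind[OF KS]) (use Dm in simp)
  then have BmW: "(\<lambda>\<psi>. bind (?K \<psi>) (\<lambda>\<psi>1. distr (?K \<psi>1) ?S3 (\<lambda>\<psi>2. (\<psi>, \<psi>1, \<psi>2)))) \<in> W \<rightarrow>\<^sub>M subprob_algebra ?S3"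
    by (simp add: measurable_cong_sets[OF Ws refl])
  have inner: "(\<integral>\<^sup>+x. g x \<partial>bind (?K \<psi>) (\<lambda>\<psi>1. distr (?K \<psi>1) ?S3 (\<lambda>\<psi>2. (\<psi>, \<psi>1, \<psi>2))))
      = (\<Sum>i\<in>UNIV. ennreal (P (snd \<psi>) (fst i) * P (fst i) (snd i)) * g (T3 f G \<alpha> i \<psi>))" for \<psi>
  proof -
    have D1: "(\<lambda>\<psi>1. distr (?K \<psi>1) ?S3 (\<lambda>\<psi>2. (\<psi>, \<psi>1, \<psi>2))) \<in> ?K \<psi> \<rightarrow>\<^sub>M subprob_algebra ?S3"
    proof -
      have "(\<lambda>\<psi>1. (\<lambda>x. distr (?K (snd x)) ?S3 (\<lambda>\<psi>2. (fst x, snd x, \<psi>2))) (\<psi>, \<psi>1)) \<in> ?S \<rightarrow>\<^sub>M subprob_algebra ?S3"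
        by (rule measurable_compose[OF measurable_Pair1' Dm]) simp
      then show ?thesis by (simp add: measurable_cong_sets[OF sK refl])
    qed
    have gm2: "(\<lambda>\<psi>2. g (\<psi>, \<psi>1, \<psi>2)) \<in> borel_measurable ?S" for \<psi>1
      using g by measurable
    have gm1: "(\<lambda>\<psi>1. \<Sum>z2\<in>UNIV. ennreal (P (snd \<psi>1) z2) * g (\<psi>, \<psi>1, nxt f G \<alpha> \<psi>1 z2)) \<in> borel_measurable ?S"
    proof (intro borel_measurable_sum borel_measurable_times_ennreal)
      fix z2
      show "(\<lambda>\<psi>1. ennreal (P (snd \<psi>1) z2)) \<in> borel_measurable ?S"
        unfolding state_space_def by measurable
      have "(\<lambda>\<psi>1. (\<psi>, \<psi>1, nxt f G \<alpha> \<psi>1 z2)) \<in> ?S \<rightarrow>\<^sub>M ?S3"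
        using nxt_meas[OF fm] by measurable
      then show "(\<lambda>\<psi>1. g (\<psi>, \<psi>1, nxt f G \<alpha> \<psi>1 z2)) \<in> borel_measurable ?S"
        using g by (rule measurable_compose)
    qed
    have "(\<integral>\<^sup>+x. g x \<partial>bind (?K \<psi>) (\<lambda>\<psi>1. distr (?K \<psi>1) ?S3 (\<lambda>\<psi>2. (\<psi>, \<psi>1, \<psi>2))))
        = (\<integral>\<^sup>+\<psi>1. (\<integral>\<^sup>+x. g x \<partial>distr (?K \<psi>1) ?S3 (\<lambda>\<psi>2. (\<psi>, \<psi>1, \<psi>2))) \<partial>?K \<psi>)"
      by (rule nn_integral_bind[OF g D1])
    also have "\<dots> = (\<integral>\<^sup>+\<psi>1. (\<integral>\<^sup>+\<psi>2. g (\<psi>, \<psi>1, \<psi>2) \<partial>?K \<psi>1) \<partial>?K \<psi>)"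
    proof (intro nn_integral_cong)
      fix \<psi>1
      have Tm: "(\<lambda>\<psi>2. (\<psi>, \<psi>1, \<psi>2)) \<in> ?K \<psi>1 \<rightarrow>\<^sub>M ?S3"
        by (simp add: measurable_cong_sets[OF sK refl])
      show "(\<integral>\<^sup>+x. g x \<partial>distr (?K \<psi>1) ?S3 (\<lambda>\<psi>2. (\<psi>, \<psi>1, \<psi>2))) = (\<integral>\<^sup>+\<psi>2. g (\<psi>, \<psi>1, \<psi>2) \<partial>?K \<psi>1)"
        using nn_integral_distr[OF Tm, of g] g by simp
    qed
    also have "\<dots> = (\<integral>\<^sup>+\<psi>1. (\<Sum>z2\<in>UNIV. ennreal (P (snd \<psi>1) z2) * g (\<psi>, \<psi>1, nxt f G \<alpha> \<psi>1 z2)) \<partial>?K \<psi>)"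
      by (intro nn_integral_cong K_nn[OF S gm2])
    also have "\<dots> = (\<Sum>z1\<in>UNIV. ennreal (P (snd \<psi>) z1) *
        (\<Sum>z2\<in>UNIV. ennreal (P (snd (nxt f G \<alpha> \<psi> z1)) z2) * g (\<psi>, nxt f G \<alpha> \<psi> z1, nxt f G \<alpha> (nxt f G \<alpha> \<psi> z1) z2)))"
      by (rule K_nn[OF S gm1])
    also have "\<dots> = (\<Sum>i\<in>UNIV. ennreal (P (snd \<psi>) (fst i) * P (fst i) (snd i)) * g (T3 f G \<alpha> i \<psi>))"
      using S
      by (simp add: T3_def nxt_def sum_distrib_left ennreal_mult stochastic_matrix_def mult.assoc
          sum.cartesian_product case_prod_beta' flip: UNIV_Times_UNIV)
    finally show ?thesis .
  qed
  show ?thesis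
    by (simp add: nn_integral_bind[OF g BmW] inner)
qed



lemma lip_meas:
  fixes g :: "'a::euclidean_space \<Rightarrow> 'b::euclidean_space"
  assumes "\<And>x y. norm (g x - g y) \<le> L * norm (x - y)"
  shows "g \<in> borel_measurable borel"
proof -
  have "(max L 0)-lipschitz_on UNIV g"
  proof (rule lipschitz_onI)
    fix x y
    have "norm (g x - g y) \<le> L * norm (x - y)" by (rule assms)
    also have "\<dots> \<le> max L 0 * norm (x - y)" by (intro mult_right_mono) auto
    finally show "dist (g x) (g y) \<le> max L 0 * dist x y" by (simp add: dist_norm)
  qed auto
  then show ?thesis
    by (intro borel_measurable_continuous_onI lipschitz_on_continuous_on)
qed

definition Ups :: "real \<Rightarrow> ('d \<Rightarrow> 'x \<Rightarrow> 'd::real_vector) \<Rightarrow> ('d \<times> 'x) \<times> ('d \<times> 'x) \<times> ('d \<times> 'x) \<Rightarrow> 'd" where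
  "Ups \<alpha> fhat = (\<lambda>(\<psi>, \<psi>1, \<psi>2). - (1 / \<alpha>) *\<^sub>R (fhat (fst \<psi>1) (snd \<psi>2) - fhat (fst \<psi>) (snd \<psi>2)))"

context
  fixes P :: "'x::finite \<Rightarrow> 'x \<Rightarrow> real"
    and \<pi> :: "'x \<Rightarrow> real"
    and G :: "'x \<Rightarrow> 'm::euclidean_space"
    and f :: "'d::euclidean_space \<Rightarrow> 'm \<Rightarrow> 'd"
    and fbar :: "'d \<Rightarrow> 'd"
    and fhat :: "'d \<Rightarrow> 'x \<Rightarrow> 'd"
    and \<alpha> :: real
    and W :: "('d \<times> 'x) measure"
    and L :: real
  assumes P_stoch: "stochastic_matrix P"
    and P_irred: "irreducible_matrix P"
    and pi_inv: "invariant_prob P \<pi>"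
    and lf: "\<And>\<theta> \<theta>' \<xi>. norm (f \<theta>' \<xi> - f \<theta> \<xi>) \<le> L * norm (\<theta>' - \<theta>)"
    and L0: "L \<ge> 0"
    and fbar_def: "\<And>\<theta>. fbar \<theta> = (\<Sum>z\<in>UNIV. \<pi> z *\<^sub>R f \<theta> (G z))"
    and poisson: "\<And>\<theta> z. (\<Sum>z'\<in>UNIV. P z z' *\<^sub>R fhat \<theta> z') = fhat \<theta> z - (f \<theta> (G z) - fbar \<theta>)"
    and poisson_norm: "\<And>\<theta>. (\<Sum>z\<in>UNIV. \<pi> z *\<^sub>R fhat \<theta> z) = 0"
    and alpha_pos: "\<alpha> > 0"
    and varpi_prob: "prob_space W"
    and varpi_sets: "sets W = sets state_space"
    and varpi_inv: "bind W (sa_kernel P G f \<alpha>) = W"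
    and varpi_moment: "(\<integral>\<^sup>+ \<psi>. ennreal (norm (fst \<psi>)) \<partial>W) < \<infinity>"
begin

lemma P_nonneg: "0 \<le> P z z'" using P_stoch by (simp add: stochastic_matrix_def)
lemma P_sum: "(\<Sum>z'\<in>UNIV. P z z') = 1" using P_stoch by (simp add: stochastic_matrix_def)
lemma P_le1: "P z z' \<le> 1"
proof -
  have "P z z' \<le> (\<Sum>z'\<in>UNIV. P z z')" by (rule member_le_sum) (auto simp: P_nonneg)
  then show ?thesis by (simp add: P_sum)
qed
lemma pi_nonneg: "0 \<le> \<pi> z" using pi_inv by (simp add: invariant_prob_def)
lemma pi_sum: "(\<Sum>z\<in>UNIV. \<pi> z) = 1" using pi_inv by (simp add: invariant_prob_def)

lemma fm: "(\<lambda>\<theta>. f \<theta> \<xi>) \<in> borel_measurable borel"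
  by (rule lip_meas[of _ L]) (rule lf)

lemma fbar_lip: "norm (fbar \<theta>' - fbar \<theta>) \<le> L * norm (\<theta>' - \<theta>)"
proof -
  have "fbar \<theta>' - fbar \<theta> = (\<Sum>z\<in>UNIV. \<pi> z *\<^sub>R (f \<theta>' (G z) - f \<theta> (G z)))"
    by (simp add: fbar_def scaleR_diff_right sum_subtractf)
  also have "norm \<dots> \<le> (\<Sum>z\<in>UNIV. norm (\<pi> z *\<^sub>R (f \<theta>' (G z) - f \<theta> (G z))))" by (rule norm_sum)
  also have "\<dots> \<le> (\<Sum>z\<in>UNIV. \<pi> z * (L * norm (\<theta>' - \<theta>)))"
    by (intro sum_mono) (simp add: pi_nonneg lf mult_left_mono)
  also have "\<dots> = L * norm (\<theta>' - \<theta>)" by (simp add: sum_distrib_right[symmetric] pi_sum)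
  finally show ?thesis .
qed

lemma fhat_lip: obtains Kh where "Kh \<ge> 0" "\<And>\<theta> \<theta>' z. norm (fhat \<theta>' z - fhat \<theta> z) \<le> Kh * norm (\<theta>' - \<theta>)"
proof -
  obtain C where C: "C \<ge> 0" "\<And>(D :: 'x \<Rightarrow> 'd) E z.
      (\<And>z. D z - (\<Sum>z'\<in>UNIV. P z z' *\<^sub>R D z') = E z) \<Longrightarrow> (\<Sum>z\<in>UNIV. \<pi> z *\<^sub>R D z) = 0
      \<Longrightarrow> norm (D z) \<le> C * (\<Sum>z\<in>UNIV. norm (E z))"
    using poisson_bound[OF P_stoch P_irred pi_sum] by blast
  show ?thesis
  proof (rule that[of "C * (real CARD('x) * (2 * L))"])
    show "0 \<le> C * (real CARD('x) * (2 * L))" using C(1) L0 by simp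
    fix \<theta> \<theta>' z
    define E where "E z = (f \<theta>' (G z) - fbar \<theta>') - (f \<theta> (G z) - fbar \<theta>)" for z
    have DE: "(fhat \<theta>' z - fhat \<theta> z) - (\<Sum>z'\<in>UNIV. P z z' *\<^sub>R (fhat \<theta>' z' - fhat \<theta> z')) = E z" for z
      unfolding E_def by (simp add: scaleR_diff_right sum_subtractf poisson)
    have Dn: "(\<Sum>z\<in>UNIV. \<pi> z *\<^sub>R (fhat \<theta>' z - fhat \<theta> z)) = 0"
      by (simp add: scaleR_diff_right sum_subtractf poisson_norm)
    have Eb: "norm (E z) \<le> 2 * L * norm (\<theta>' - \<theta>)" for z
    proof -
      have "E z = (f \<theta>' (G z) - f \<theta> (G z)) - (fbar \<theta>' - fbar \<theta>)" by (simp add: E_def)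
      also have "norm \<dots> \<le> norm (f \<theta>' (G z) - f \<theta> (G z)) + norm (fbar \<theta>' - fbar \<theta>)" by (rule norm_triangle_ineq4)
      also have "\<dots> \<le> L * norm (\<theta>' - \<theta>) + L * norm (\<theta>' - \<theta>)" by (intro add_mono lf fbar_lip)
      finally show ?thesis by simp
    qed
    have "norm (fhat \<theta>' z - fhat \<theta> z) \<le> C * (\<Sum>z\<in>UNIV. norm (E z))"
      by (rule C(2)[OF DE Dn])
    also have "\<dots> \<le> C * (\<Sum>z\<in>(UNIV::'x set). 2 * L * norm (\<theta>' - \<theta>))"
      by (intro mult_left_mono sum_mono Eb C(1))
    also have "\<dots> = C * (real CARD('x) * (2 * L)) * norm (\<theta>' - \<theta>)" by simp
    finally show "norm (fhat \<theta>' z - fhat \<theta> z) \<le> C * (real CARD('x) * (2 * L)) * norm (\<theta>' - \<theta>)" .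
  qed
qed

lemma chain_W: "chain_law (sa_kernel P G f \<alpha>) W n = W"
  by (induction n) (simp_all add: varpi_inv)

lemma measW: "measurable W N = measurable state_space N"
  by (rule measurable_cong_sets[OF varpi_sets refl])

lemma measW2: "measurable N W = measurable N state_space"
  by (rule measurable_cong_sets[OF refl varpi_sets])

lemma int_norm_fst: "integrable W (\<lambda>\<psi>. norm (fst \<psi>))"
proof -
  have m: "(\<lambda>\<psi>::'d \<times> 'x. norm (fst \<psi>)) \<in> borel_measurable W"
    unfolding measW state_space_def by measurable
  show ?thesis using m varpi_moment by (simp add: integrable_iff_bounded)
qed

lemma intW:
  fixes F :: "'d \<times> 'x \<Rightarrow> 'b::{banach, second_countable_topology}"
  assumes m: "F \<in> borel_measurable state_space"
    and b: "\<And>\<psi>. norm (F \<psi>) \<le> a + b * norm (fst \<psi>)"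
  shows "integrable W F"
proof -
  interpret prob_space W by (rule varpi_prob)
  have "integrable W (\<lambda>\<psi>. a + b * norm (fst \<psi>))"
    using int_norm_fst by simp
  then show ?thesis
  proof (rule Bochner_Integration.integrable_bound)
    show "F \<in> borel_measurable W" using m by (simp add: measW)
    show "AE x in W. norm (F x) \<le> norm (a + b * norm (fst x))"
      by (intro AE_I2) (metis b real_norm_def abs_ge_self order_trans)
  qed
qed

lemma Tm: "(\<lambda>\<psi>. nxt f G \<alpha> \<psi> z') \<in> W \<rightarrow>\<^sub>M W"
  unfolding measW measW2 by (rule nxt_meas[OF fm])

lemma cm: "(\<lambda>\<psi>. P (snd \<psi>) z') \<in> borel_measurable W"
  unfolding measW state_space_def by measurable

lemma nnW:
  assumes g: "g \<in> borel_measurable W"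
  shows "(\<integral>\<^sup>+x. g x \<partial>W) = (\<integral>\<^sup>+\<psi>. (\<Sum>z'\<in>UNIV. ennreal (P (snd \<psi>) z') * g (nxt f G \<alpha> \<psi> z')) \<partial>W)"
proof -
  have "(\<integral>\<^sup>+x. g x \<partial>W) = (\<integral>\<^sup>+x. g x \<partial>bind W (sa_kernel P G f \<alpha>))" by (simp add: varpi_inv)
  also have "\<dots> = (\<integral>\<^sup>+\<psi>. (\<Sum>z'\<in>UNIV. ennreal (P (snd \<psi>) z') * g (nxt f G \<alpha> \<psi> z')) \<partial>W)"
    by (rule nn1[OF P_stoch fm varpi_sets]) (use g in \<open>simp add: measW\<close>)
  finally show ?thesis .
qed

lemma stat_int:
  fixes h :: "'d \<times> 'x \<Rightarrow> 'b::euclidean_space"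
  assumes h: "integrable W h"
  shows "integrable W (\<lambda>\<psi>. \<Sum>z'\<in>UNIV. P (snd \<psi>) z' *\<^sub>R h (nxt f G \<alpha> \<psi> z'))"
    and "(\<integral>\<psi>. (\<Sum>z'\<in>UNIV. P (snd \<psi>) z' *\<^sub>R h (nxt f G \<alpha> \<psi> z')) \<partial>W) = integral\<^sup>L W h"
  using transfer_vec[where I=UNIV and T="\<lambda>z' \<psi>. nxt f G \<alpha> \<psi> z'" and c="\<lambda>z' \<psi>. P (snd \<psi>) z'",
      OF _ Tm cm P_nonneg nnW h] by auto

abbreviation "S3 \<equiv> (state_space \<Otimes>\<^sub>M state_space \<Otimes>\<^sub>M state_space :: (('d \<times> 'x) \<times> ('d \<times> 'x) \<times> ('d \<times> 'x)) measure)"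

abbreviation "LL3 \<equiv> bind W (\<lambda>\<psi>. bind (sa_kernel P G f \<alpha> \<psi>) (\<lambda>\<psi>1.
        distr (sa_kernel P G f \<alpha> \<psi>1) S3 (\<lambda>\<psi>2. (\<psi>, \<psi>1, \<psi>2))))"

lemma L3_eq: "chain_law3 (sa_kernel P G f \<alpha>) state_space W n = LL3"
  by (simp add: chain_law3_def chain_W)

lemma sets_LL3: "sets LL3 = sets S3"
proof (rule sets_bind)
  show "space W \<noteq> {}" using prob_space.not_empty[OF varpi_prob] .
  fix \<psi> show "sets (bind (sa_kernel P G f \<alpha> \<psi>) (\<lambda>\<psi>1. distr (sa_kernel P G f \<alpha> \<psi>1) S3 (\<lambda>\<psi>2. (\<psi>, \<psi>1, \<psi>2)))) = sets S3"
    by (rule sets_bind) (simp_all add: sa_kernel_def)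
qed

lemma measL3: "measurable LL3 N = measurable S3 N"
  by (rule measurable_cong_sets[OF sets_LL3 refl])

lemma measL3': "measurable N LL3 = measurable N S3"
  by (rule measurable_cong_sets[OF refl sets_LL3])

lemma nn3W:
  assumes g: "g \<in> borel_measurable LL3"
  shows "(\<integral>\<^sup>+x. g x \<partial>LL3) = (\<integral>\<^sup>+\<psi>. (\<Sum>i\<in>UNIV. ennreal (P (snd \<psi>) (fst i) * P (fst i) (snd i)) * g (T3 f G \<alpha> i \<psi>)) \<partial>W)"
  by (rule nn3[OF P_stoch fm varpi_sets]) (use g in \<open>simp add: measL3\<close>)

lemma T3m: "T3 f G \<alpha> i \<in> W \<rightarrow>\<^sub>M LL3"
  unfolding measW measL3' T3_def
  using nxt_meas[OF fm] by measurable

lemma c3m: "(\<lambda>\<psi>. P (snd \<psi>) (fst i) * P (fst i) (snd i)) \<in> borel_measurable W"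
  unfolding measW state_space_def by measurable

lemma c3_nonneg: "0 \<le> P (snd \<psi>) (fst i) * P (fst i) (snd i)"
  by (simp add: P_nonneg)

lemma fhat_meas: "(\<lambda>\<theta>. fhat \<theta> z) \<in> borel_measurable borel"
proof -
  obtain Kh where Kh: "Kh \<ge> 0" "\<And>\<theta> \<theta>' z. norm (fhat \<theta>' z - fhat \<theta> z) \<le> Kh * norm (\<theta>' - \<theta>)"
    by (rule fhat_lip) blast
  show ?thesis by (rule lip_meas[of _ Kh]) (rule Kh(2))
qed

lemma Ups_meas: "Ups \<alpha> fhat \<in> borel_measurable S3"
proof -
  define F where "F i x = - (1 / \<alpha>) *\<^sub>R (fhat (fst (fst (snd x))) i - fhat (fst (fst x)) i)"
    for i and x :: "('d \<times> 'x) \<times> ('d \<times> 'x) \<times> ('d \<times> 'x)"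
  have A: "F i \<in> borel_measurable S3" for i
    unfolding F_def state_space_def using fhat_meas[of i] by measurable
  have B: "(\<lambda>x. snd (snd (snd x))) \<in> S3 \<rightarrow>\<^sub>M count_space (UNIV :: 'x set)"
    unfolding state_space_def by measurable
  have "(\<lambda>x. F (snd (snd (snd x))) x) \<in> borel_measurable S3"
    using measurable_compose_countable'[where f=F and I=UNIV, OF A B] by simp
  moreover have "Ups \<alpha> fhat = (\<lambda>x. F (snd (snd (snd x))) x)"
    by (auto simp: Ups_def F_def fun_eq_iff)
  ultimately show ?thesis by simp
qed

lemma f_bound: "norm (f \<theta> \<xi>) \<le> norm (f 0 \<xi>) + L * norm \<theta>"
  using lf[where \<theta>=0 and \<theta>'=\<theta> and \<xi>=\<xi>] norm_triangle_sub[of "f \<theta> \<xi>" "f 0 \<xi>"] by simp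

lemma Ups_T3: "Ups \<alpha> fhat (T3 f G \<alpha> i \<psi>) =
    - (1 / \<alpha>) *\<^sub>R (fhat (fst \<psi> + \<alpha> *\<^sub>R f (fst \<psi>) (G (fst i))) (snd i) - fhat (fst \<psi>) (snd i))"
  by (simp add: Ups_def T3_def nxt_def)

lemma Ups_int: "integrable LL3 (Ups \<alpha> fhat)"
proof -
  obtain Kh where Kh: "Kh \<ge> 0" "\<And>\<theta> \<theta>' z. norm (fhat \<theta>' z - fhat \<theta> z) \<le> Kh * norm (\<theta>' - \<theta>)"
    by (rule fhat_lip) blast
  let ?g = "\<lambda>\<psi>. \<Sum>i\<in>UNIV. P (snd \<psi>) (fst i) * P (fst i) (snd i) * norm (Ups \<alpha> fhat (T3 f G \<alpha> i \<psi>))"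
  have pt: "norm (Ups \<alpha> fhat (T3 f G \<alpha> i \<psi>)) \<le> Kh * norm (f 0 (G (fst i))) + Kh * L * norm (fst \<psi>)" for i \<psi>
  proof -
    have "norm (Ups \<alpha> fhat (T3 f G \<alpha> i \<psi>)) = (1 / \<alpha>) * norm (fhat (fst \<psi> + \<alpha> *\<^sub>R f (fst \<psi>) (G (fst i))) (snd i) - fhat (fst \<psi>) (snd i))"
      using alpha_pos by (simp add: Ups_T3)
    also have "\<dots> \<le> (1 / \<alpha>) * (Kh * norm (\<alpha> *\<^sub>R f (fst \<psi>) (G (fst i))))"
      using alpha_pos Kh(2)[of "fst \<psi> + \<alpha> *\<^sub>R f (fst \<psi>) (G (fst i))" "snd i" "fst \<psi>"] by (intro mult_left_mono) auto
    also have "\<dots> = Kh * norm (f (fst \<psi>) (G (fst i)))" using alpha_pos by simp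
    also have "\<dots> \<le> Kh * (norm (f 0 (G (fst i))) + L * norm (fst \<psi>))"
      by (intro mult_left_mono f_bound Kh(1))
    finally show ?thesis by (simp add: algebra_simps)
  qed
  have gint: "integrable W ?g"
  proof (rule intW[where a="\<Sum>i\<in>UNIV. Kh * norm (f 0 (G (fst (i::'x\<times>'x))))" and b="real CARD('x \<times> 'x) * (Kh * L)"])
    have m1: "(\<lambda>\<psi>. norm (Ups \<alpha> fhat (T3 f G \<alpha> i \<psi>))) \<in> borel_measurable state_space" for i
      using measurable_compose[OF T3m Ups_meas[folded measL3]] by (simp add: measW)
    have m2: "(\<lambda>\<psi>. P (snd \<psi>) (fst i) * P (fst i) (snd i)) \<in> borel_measurable state_space" for i
      unfolding state_space_def by measurable
    show "?g \<in> borel_measurable state_space" by (rule borel_measurable_sum, rule borel_measurable_times[OF m2 m1])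
    fix \<psi>
    have "norm (?g \<psi>) = ?g \<psi>" unfolding real_norm_def using P_nonneg by (intro abs_of_nonneg sum_nonneg mult_nonneg_nonneg) auto
    also have "\<dots> \<le> (\<Sum>i\<in>UNIV. Kh * norm (f 0 (G (fst (i::'x\<times>'x)))) + Kh * L * norm (fst \<psi>))"
    proof (intro sum_mono)
      fix i :: "'x \<times> 'x"
      have "P (snd \<psi>) (fst i) * P (fst i) (snd i) \<le> 1" using P_le1 P_nonneg by (simp add: mult_le_one)
      moreover have "0 \<le> Kh * norm (f 0 (G (fst i))) + Kh * L * norm (fst \<psi>)" using Kh(1) L0 by simp
      ultimately have "P (snd \<psi>) (fst i) * P (fst i) (snd i) * norm (Ups \<alpha> fhat (T3 f G \<alpha> i \<psi>))
          \<le> 1 * (Kh * norm (f 0 (G (fst i))) + Kh * L * norm (fst \<psi>))"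
        using pt[of i \<psi>] P_nonneg by (intro mult_mono) auto
      then show "P (snd \<psi>) (fst i) * P (fst i) (snd i) * norm (Ups \<alpha> fhat (T3 f G \<alpha> i \<psi>))
          \<le> Kh * norm (f 0 (G (fst i))) + Kh * L * norm (fst \<psi>)" by simp
    qed
    also have "\<dots> = (\<Sum>i\<in>UNIV. Kh * norm (f 0 (G (fst (i::'x\<times>'x))))) + real CARD('x \<times> 'x) * (Kh * L) * norm (fst \<psi>)"
      by (simp add: sum.distrib)
    finally show "norm (?g \<psi>) \<le> (\<Sum>i\<in>UNIV. Kh * norm (f 0 (G (fst (i::'x\<times>'x))))) + real CARD('x \<times> 'x) * (Kh * L) * norm (fst \<psi>)" .
  qed
  have hm: "Ups \<alpha> fhat \<in> borel_measurable LL3" by (simp add: measL3 Ups_meas)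
  show ?thesis
  proof (rule transfer_back[where I=UNIV and T="T3 f G \<alpha>" and c="\<lambda>i \<psi>. P (snd \<psi>) (fst i) * P (fst i) (snd i)"
      and M=LL3 and N=W and h="Ups \<alpha> fhat"])
    show "finite (UNIV :: ('x \<times> 'x) set)" by simp
    show "0 \<le> P (snd y) (fst i) * P (fst i) (snd i)" for i y by (rule c3_nonneg)
    show "(\<integral>\<^sup>+x. g x \<partial>LL3) = (\<integral>\<^sup>+\<psi>. (\<Sum>i\<in>UNIV. ennreal (P (snd \<psi>) (fst i) * P (fst i) (snd i)) * g (T3 f G \<alpha> i \<psi>)) \<partial>W)"
      if "g \<in> borel_measurable LL3" for g using that by (rule nn3W)
    show "Ups \<alpha> fhat \<in> borel_measurable LL3" by (rule hm)
    show "integrable W ?g" by (rule gint)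
  qed
qed

lemma fbar_meas: "fbar \<in> borel_measurable borel"
  by (rule lip_meas[of _ L]) (rule fbar_lip)

lemma int_fbar: "integrable W (\<lambda>\<psi>. fbar (fst \<psi>))"
proof (rule intW[where a="norm (fbar 0)" and b=L])
  show "(\<lambda>\<psi>::'d\<times>'x. fbar (fst \<psi>)) \<in> borel_measurable state_space"
    unfolding state_space_def using fbar_meas by measurable
  fix \<psi> :: "'d \<times> 'x"
  show "norm (fbar (fst \<psi>)) \<le> norm (fbar 0) + L * norm (fst \<psi>)"
    using fbar_lip[of "fst \<psi>" 0] norm_triangle_sub[of "fbar (fst \<psi>)" "fbar 0"] by simp
qed

lemma int_fst: "integrable W (\<lambda>\<psi>. fst \<psi>)"
proof (rule intW[where a=0 and b=1])
  show "(\<lambda>\<psi>::'d\<times>'x. fst \<psi>) \<in> borel_measurable state_space"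
    unfolding state_space_def by measurable
qed simp

definition "HH \<psi> = (\<Sum>z2\<in>UNIV. P (snd \<psi>) z2 *\<^sub>R fhat (fst \<psi>) z2)"

lemma int_HH: "integrable W HH"
proof -
  obtain Kh where Kh: "Kh \<ge> 0" "\<And>\<theta> \<theta>' z. norm (fhat \<theta>' z - fhat \<theta> z) \<le> Kh * norm (\<theta>' - \<theta>)"
    by (rule fhat_lip) blast
  show ?thesis
  proof (rule intW[where a="\<Sum>z2\<in>UNIV. norm (fhat 0 z2)" and b="real CARD('x) * Kh"])
    have "(\<lambda>\<psi>::'d\<times>'x. P (snd \<psi>) z2 *\<^sub>R fhat (fst \<psi>) z2) \<in> borel_measurable state_space" for z2
      unfolding state_space_def using fhat_meas[of z2] by measurable
    then show "HH \<in> borel_measurable state_space"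
      unfolding HH_def[abs_def] by (rule borel_measurable_sum)
    fix \<psi> :: "'d \<times> 'x"
    have "norm (HH \<psi>) \<le> (\<Sum>z2\<in>UNIV. norm (P (snd \<psi>) z2 *\<^sub>R fhat (fst \<psi>) z2))"
      unfolding HH_def by (rule norm_sum)
    also have "\<dots> \<le> (\<Sum>z2\<in>UNIV. norm (fhat 0 z2) + Kh * norm (fst \<psi>))"
    proof (intro sum_mono)
      fix z2
      have "norm (fhat (fst \<psi>) z2) \<le> norm (fhat 0 z2) + Kh * norm (fst \<psi>)"
        using Kh(2)[of "fst \<psi>" z2 0] norm_triangle_sub[of "fhat (fst \<psi>) z2" "fhat 0 z2"] by simp
      moreover have "norm (P (snd \<psi>) z2 *\<^sub>R fhat (fst \<psi>) z2) \<le> norm (fhat (fst \<psi>) z2)"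
        using P_le1 P_nonneg by (simp add: mult_left_le_one_le)
      ultimately show "norm (P (snd \<psi>) z2 *\<^sub>R fhat (fst \<psi>) z2) \<le> norm (fhat 0 z2) + Kh * norm (fst \<psi>)"
        by linarith
    qed
    also have "\<dots> = (\<Sum>z2\<in>UNIV. norm (fhat 0 z2)) + real CARD('x) * Kh * norm (fst \<psi>)"
      by (simp add: sum.distrib)
    finally show "norm (HH \<psi>) \<le> (\<Sum>z2\<in>UNIV. norm (fhat 0 z2)) + real CARD('x) * Kh * norm (fst \<psi>)" .
  qed
qed

lemma HH_poisson: "HH (\<theta>, z) = fhat \<theta> z - (f \<theta> (G z) - fbar \<theta>)"
  by (simp add: HH_def poisson)

lemma pointwise:
  "(\<Sum>i\<in>UNIV. (P (snd \<psi>) (fst i) * P (fst i) (snd i)) *\<^sub>R Ups \<alpha> fhat (T3 f G \<alpha> i \<psi>))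
   = - (1 / \<alpha>) *\<^sub>R ((\<Sum>z1\<in>UNIV. P (snd \<psi>) z1 *\<^sub>R HH (nxt f G \<alpha> \<psi> z1)) - HH \<psi>
        + (1 / \<alpha>) *\<^sub>R ((\<Sum>z1\<in>UNIV. P (snd \<psi>) z1 *\<^sub>R fst (nxt f G \<alpha> \<psi> z1)) - fst \<psi>) - fbar (fst \<psi>))"
proof -
  obtain \<theta> z where \<psi>: "\<psi> = (\<theta>, z)" by (cases \<psi>)
  define \<theta>1 where "\<theta>1 z1 = \<theta> + \<alpha> *\<^sub>R f \<theta> (G z1)" for z1
  have nx: "nxt f G \<alpha> \<psi> z1 = (\<theta>1 z1, z1)" for z1 by (simp add: nxt_def \<psi> \<theta>1_def)
  have "(\<Sum>i\<in>UNIV. (P (snd \<psi>) (fst i) * P (fst i) (snd i)) *\<^sub>R Ups \<alpha> fhat (T3 f G \<alpha> i \<psi>))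
      = (\<Sum>z1\<in>UNIV. \<Sum>z2\<in>UNIV. (P z z1 * P z1 z2) *\<^sub>R (- (1 / \<alpha>) *\<^sub>R (fhat (\<theta>1 z1) z2 - fhat \<theta> z2)))"
    by (simp add: Ups_T3 \<psi> \<theta>1_def flip: UNIV_Times_UNIV add: sum.cartesian_product')
  also have "\<dots> = - (1 / \<alpha>) *\<^sub>R ((\<Sum>z1\<in>UNIV. P z z1 *\<^sub>R HH (\<theta>1 z1, z1))
      - (\<Sum>z1\<in>UNIV. P z z1 *\<^sub>R HH (\<theta>, z1)))"
  proof -
    have "(\<Sum>z1\<in>UNIV. \<Sum>z2\<in>UNIV. (P z z1 * P z1 z2) *\<^sub>R (- (1 / \<alpha>) *\<^sub>R (fhat (\<theta>1 z1) z2 - fhat \<theta> z2)))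
        = - (1 / \<alpha>) *\<^sub>R (\<Sum>z1\<in>UNIV. P z z1 *\<^sub>R (\<Sum>z2\<in>UNIV. P z1 z2 *\<^sub>R (fhat (\<theta>1 z1) z2 - fhat \<theta> z2)))"
      by (simp add: scaleR_sum_right mult.commute)
    also have "\<dots> = - (1 / \<alpha>) *\<^sub>R ((\<Sum>z1\<in>UNIV. P z z1 *\<^sub>R HH (\<theta>1 z1, z1))
      - (\<Sum>z1\<in>UNIV. P z z1 *\<^sub>R HH (\<theta>, z1)))"
      by (simp add: HH_def scaleR_diff_right sum_subtractf)
    finally show ?thesis .
  qed
  also have "(\<Sum>z1\<in>UNIV. P z z1 *\<^sub>R HH (\<theta>, z1)) = HH \<psi> - (\<Sum>z1\<in>UNIV. P z z1 *\<^sub>R f \<theta> (G z1)) + fbar \<theta>"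
  proof -
    have "(\<Sum>z1\<in>UNIV. P z z1 *\<^sub>R HH (\<theta>, z1)) = (\<Sum>z1\<in>UNIV. P z z1 *\<^sub>R fhat \<theta> z1 - P z z1 *\<^sub>R f \<theta> (G z1) + P z z1 *\<^sub>R fbar \<theta>)"
      by (simp add: HH_poisson algebra_simps)
    also have "\<dots> = HH \<psi> - (\<Sum>z1\<in>UNIV. P z z1 *\<^sub>R f \<theta> (G z1)) + (\<Sum>z1\<in>UNIV. P z z1) *\<^sub>R fbar \<theta>"
      by (simp add: sum.distrib sum_subtractf HH_def \<psi> scaleR_sum_left)
    finally show ?thesis by (simp add: P_sum)
  qed
  also have "(\<Sum>z1\<in>UNIV. P z z1 *\<^sub>R f \<theta> (G z1)) = (1 / \<alpha>) *\<^sub>R ((\<Sum>z1\<in>UNIV. P z z1 *\<^sub>R fst (nxt f G \<alpha> \<psi> z1)) - fst \<psi>)"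
  proof -
    have "(\<Sum>z1\<in>UNIV. P z z1 *\<^sub>R fst (nxt f G \<alpha> \<psi> z1)) = (\<Sum>z1\<in>UNIV. P z z1) *\<^sub>R \<theta> + \<alpha> *\<^sub>R (\<Sum>z1\<in>UNIV. P z z1 *\<^sub>R f \<theta> (G z1))"
      by (simp add: nx \<theta>1_def scaleR_add_right sum.distrib scaleR_sum_left scaleR_sum_right mult.commute)
    then show ?thesis using alpha_pos by (simp add: P_sum \<psi>)
  qed
  finally show ?thesis by (simp add: nx[unfolded \<psi>] \<psi> algebra_simps)
qed

lemma main_eq: "(\<integral>\<psi>. fbar (fst \<psi>) \<partial>W) = \<alpha> *\<^sub>R (\<integral>w. Ups \<alpha> fhat w \<partial>LL3)"
proof -
  have T: "(\<integral>\<psi>. (\<Sum>i\<in>UNIV. (P (snd \<psi>) (fst i) * P (fst i) (snd i)) *\<^sub>R Ups \<alpha> fhat (T3 f G \<alpha> i \<psi>)) \<partial>W)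
      = integral\<^sup>L LL3 (Ups \<alpha> fhat)"
  proof (rule transfer_vec(2)[where I=UNIV and T="T3 f G \<alpha>" and c="\<lambda>i \<psi>. P (snd \<psi>) (fst i) * P (fst i) (snd i)"
      and M=LL3 and N=W and h="Ups \<alpha> fhat"])
    show "finite (UNIV :: ('x \<times> 'x) set)" by simp
    show "T3 f G \<alpha> i \<in> W \<rightarrow>\<^sub>M LL3" if "i \<in> UNIV" for i by (rule T3m)
    show "(\<lambda>\<psi>. P (snd \<psi>) (fst i) * P (fst i) (snd i)) \<in> borel_measurable W" if "i \<in> UNIV" for i by (rule c3m)
    show "0 \<le> P (snd y) (fst i) * P (fst i) (snd i)" for i y by (rule c3_nonneg)
    show "(\<integral>\<^sup>+x. g x \<partial>LL3) = (\<integral>\<^sup>+\<psi>. (\<Sum>i\<in>UNIV. ennreal (P (snd \<psi>) (fst i) * P (fst i) (snd i)) * g (T3 f G \<alpha> i \<psi>)) \<partial>W)"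
      if "g \<in> borel_measurable LL3" for g using that by (rule nn3W)
    show "integrable LL3 (Ups \<alpha> fhat)" by (rule Ups_int)
  qed
  define A1 where "A1 \<psi> = (\<Sum>z1\<in>UNIV. P (snd \<psi>) z1 *\<^sub>R HH (nxt f G \<alpha> \<psi> z1))" for \<psi>
  define Q where "Q \<psi> = (\<Sum>z1\<in>UNIV. P (snd \<psi>) z1 *\<^sub>R fst (nxt f G \<alpha> \<psi> z1))" for \<psi>
  have iA1: "integrable W A1" and eA1: "integral\<^sup>L W A1 = integral\<^sup>L W HH"
    unfolding A1_def[abs_def] using stat_int[OF int_HH] by auto
  have iQ: "integrable W Q" and eQ: "integral\<^sup>L W Q = (\<integral>\<psi>. fst \<psi> \<partial>W)"
    unfolding Q_def[abs_def] using stat_int[OF int_fst] by auto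
  have "integral\<^sup>L LL3 (Ups \<alpha> fhat) = (\<integral>\<psi>. - (1 / \<alpha>) *\<^sub>R (A1 \<psi> - HH \<psi> + (1 / \<alpha>) *\<^sub>R (Q \<psi> - fst \<psi>) - fbar (fst \<psi>)) \<partial>W)"
    unfolding T[symmetric] A1_def Q_def by (simp only: pointwise)
  also have "\<dots> = - (1 / \<alpha>) *\<^sub>R ((\<integral>\<psi>. A1 \<psi> \<partial>W) - (\<integral>\<psi>. HH \<psi> \<partial>W) + (1 / \<alpha>) *\<^sub>R ((\<integral>\<psi>. Q \<psi> \<partial>W) - (\<integral>\<psi>. fst \<psi> \<partial>W)) - (\<integral>\<psi>. fbar (fst \<psi>) \<partial>W))"
    using iA1 int_HH iQ int_fst int_fbar by simp
  also have "\<dots> = (1 / \<alpha>) *\<^sub>R (\<integral>\<psi>. fbar (fst \<psi>) \<partial>W)"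
    using eA1 eQ by simp
  finally show ?thesis using alpha_pos by simp
qed

end

theorem proposition2p14:
  fixes P :: "'x::finite \<Rightarrow> 'x \<Rightarrow> real"
    and \<pi> :: "'x \<Rightarrow> real"
    and G :: "'x \<Rightarrow> 'm::euclidean_space"
    and f :: "'d::euclidean_space \<Rightarrow> 'm \<Rightarrow> 'd"
    and fbar :: "'d \<Rightarrow> 'd"
    and fhat :: "'d \<Rightarrow> 'x \<Rightarrow> 'd"
    and \<alpha> :: real
    and W :: "('d \<times> 'x) measure"
  assumes P_stoch: "stochastic_matrix P"
    and P_irred: "irreducible_matrix P"
    and pi_inv: "invariant_prob P \<pi>"
    and pi_unique: "\<And>\<mu>. invariant_prob P \<mu> \<Longrightarrow> \<mu> = \<pi>"
    and f_lip: "\<exists>Lf. \<forall>\<theta> \<theta>' \<xi> \<xi>'.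
        norm (f \<theta>' \<xi> - f \<theta> \<xi>) + norm (f \<theta> \<xi>' - f \<theta> \<xi>) \<le> Lf * (norm (\<theta>' - \<theta>) + norm (\<xi>' - \<xi>))"
    and fbar_def: "\<And>\<theta>. fbar \<theta> = (\<Sum>z\<in>UNIV. \<pi> z *\<^sub>R f \<theta> (G z))"
    and poisson: "\<And>\<theta> z. (\<Sum>z'\<in>UNIV. P z z' *\<^sub>R fhat \<theta> z') = fhat \<theta> z - (f \<theta> (G z) - fbar \<theta>)"
    and poisson_norm: "\<And>\<theta>. (\<Sum>z\<in>UNIV. \<pi> z *\<^sub>R fhat \<theta> z) = 0"
    and alpha_pos: "\<alpha> > 0"
    and bounded_moment: "\<exists>\<psi>0. \<exists>B < \<infinity>. \<forall>n.
        (\<integral>\<^sup>+ \<psi>. ennreal ((norm (fst \<psi>))\<^sup>2)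
           \<partial>(chain_law (sa_kernel P G f \<alpha>) (return state_space \<psi>0) n)) \<le> B"
    and varpi_prob: "prob_space W"
    and varpi_sets: "sets W = sets state_space"
    and varpi_inv: "bind W (sa_kernel P G f \<alpha>) = W"
    and varpi_moment: "(\<integral>\<^sup>+ \<psi>. ennreal (norm (fst \<psi>)) \<partial>W) < \<infinity>"
  shows "\<forall>n.
      let L1 = chain_law (sa_kernel P G f \<alpha>) W n;
          L3 = chain_law3 (sa_kernel P G f \<alpha>) state_space W n;
          L1' = chain_law (sa_kernel P G f \<alpha>) W 0;
          L3' = chain_law3 (sa_kernel P G f \<alpha>) state_space W 0;
          Ups = (\<lambda>(\<psi>, \<psi>1, \<psi>2). - (1 / \<alpha>) *\<^sub>R (fhat (fst \<psi>1) (snd \<psi>2) - fhat (fst \<psi>) (snd \<psi>2)))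
      in integrable L1 (\<lambda>\<psi>. fbar (fst \<psi>))
       \<and> integrable L3 Ups
       \<and> (\<integral>\<psi>. fbar (fst \<psi>) \<partial>L1) = \<alpha> *\<^sub>R (\<integral>w. Ups w \<partial>L3)
       \<and> (\<integral>\<psi>. fbar (fst \<psi>) \<partial>L1) = (\<integral>\<psi>. fbar (fst \<psi>) \<partial>L1')
       \<and> (\<integral>w. Ups w \<partial>L3) = (\<integral>w. Ups w \<partial>L3')"
  proof -
  obtain Lf where Lf: "\<forall>\<theta> \<theta>' \<xi> \<xi>'.
        norm (f \<theta>' \<xi> - f \<theta> \<xi>) + norm (f \<theta> \<xi>' - f \<theta> \<xi>) \<le> Lf * (norm (\<theta>' - \<theta>) + norm (\<xi>' - \<xi>))"
    using f_lip by blast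
  define L where "L = max Lf 0"
  have L0: "L \<ge> 0" by (simp add: L_def)
  have lf: "norm (f \<theta>' \<xi> - f \<theta> \<xi>) \<le> L * norm (\<theta>' - \<theta>)" for \<theta> \<theta>' \<xi>
  proof -
    have "norm (f \<theta>' \<xi> - f \<theta> \<xi>) \<le> Lf * norm (\<theta>' - \<theta>)"
      using Lf[rule_format, of \<theta>' \<xi> \<theta> \<xi>] by simp
    also have "\<dots> \<le> L * norm (\<theta>' - \<theta>)" by (intro mult_right_mono) (auto simp: L_def)
    finally show ?thesis .
  qed
  note facts = P_stoch P_irred pi_inv lf L0 fbar_def poisson poisson_norm alpha_pos
    varpi_prob varpi_sets varpi_inv varpi_moment
  have U: "(\<lambda>(\<psi>, \<psi>1, \<psi>2). - (1 / \<alpha>) *\<^sub>R (fhat (fst \<psi>1) (snd \<psi>2) - fhat (fst \<psi>) (snd \<psi>2))) = Ups \<alpha> fhat"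
    by (simp add: Ups_def)
  show ?thesis
    unfolding Let_def U
    using chain_W[OF facts] L3_eq[OF facts] int_fbar[OF facts] Ups_int[OF facts] main_eq[OF facts]
    by simp
qed

end
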